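(* For all $k\in\mathbb{N}$ and all indices $i\ne j$ in their respective ranges, $\lambda^{(k)}_{i,j}\ge0$ and $\mu^{(k)}_{i,j}\ge0$.
   Context: $\rho=1+\sqrt2$; $\alpha_t=\rho^{\nu(t+1)-1}+1$ ($\nu(i)$ the largest $j$ with $2^j\mid i$). For $k\in\mathbb{N}$, $n=2^k-1$, $\pi^{(k)}=[\alpha_0,\dots,\alpha_{n-1}]\in\mathbb{R}^n$, indexed $\pi^{(k)}_1,\dots,\pi^{(k)}_n$. Define $c^{(k)}\in\mathbb{R}^n$ (indexed $1,\dots,n$) by $c^{(1)}=[2(\rho-1)]$, $c^{(k+1)}=[\pi^{(k)},(1+\rho^{-k})(\rho^{k-1}+1),\rho c^{(k)}-(\rho-1-\rho^{-k})\pi^{(k)}]$. Multipliers $\lambda^{(k)}_{i,j}$, $i\in\{0,\dots,n,*\}$, $j\in\{0,\dots,n\}$: $\lambda^{(k)}_{i,j}=\bar\lambda^{(k)}_{i,j}$ for $i\ne *$ and $\lambda^{(k)}_{*,j}=\underline\lambda^{(k)}_j$, where $\underline\lambda^{(k)}=[\pi^{(k)},\rho^k]$ indexed $0,\dots,n$ (so $\underline\lambda^{(k)}_j=\alpha_j$ for $j<n$, $\underline\lambda^{(k)}_n=\rho^k$). $\bar\lambda^{(1)}$ (indices $0,1$) has $\bar\lambda^{(1)}_{0,1}=\rho$, $\bar\lambda^{(1)}_{1,0}=1$, other entries $0$. For $n=2^k-1$ and indices $0\le i,j\le 2n+1$, $\bar\lambda^{(k+1)}_{i,j}$ is the sum of: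 $\bar\lambda^{(k)}_{i,j}\mathbf 1\{0\le i,j\le n\}+\rho^2\bar\lambda^{(k)}_{i-n-1,j-n-1}\mathbf 1\{n+1\le i,j\le 2n+1\}$; $\rho\mathbf 1\{(i,j)=(n,2n+1)\}+\rho^k\mathbf 1\{(i,j)=(2n+1,n)\}$; and $\rho\pi^{(k)}_{j-n}\mathbf 1\{i=n,\ n+1\le j\le 2n\}+\rho\pi^{(k)}_{j-n}\mathbf 1\{i=2n+1,\ n+1\le j\le 2n\}$. Multipliers $\mu^{(k)}_{i,j}$, $i\in\{1,\dots,n,*\}$, $j\in\{1,\dots,n\}$: $\mu^{(k)}_{i,j}=\bar\mu^{(k)}_{i,j}$ for $i\ne*$ and $\mu^{(k)}_{*,j}=c^{(k)}_j+\mathbf 1\{j=1\}$. $\bar\mu^{(1)}_{1,1}=0$. For $1\le i,j\le 2n+1$, $\bar\mu^{(k+1)}_{i,j}$ is the sum of: $\bar\mu^{(k)}_{i,j}\mathbf 1\{1\le i,j\le n\}+\rho^2\bar\mu^{(k)}_{i-n-1,j-n-1}\mathbf 1\{n+2\le i,j\le 2n+1\}$; $\rho^k\mathbf 1\{(i,j)=(n,n+1)\}+\rho^2\mathbf 1\{(i,j)=(n+1,n+2)\}+(\rho-\rho^{-k})(\rho^{k-1}+1)\mathbf 1\{(i,j)=(2n+1,n+1)\}$; and $\big(1-\frac{\rho^k}{\rho^{k-1}+1}\big)(c^{(k)}_j-\pi^{(k)}_j)\mathbf 1\{i=n,1\le j\le n\}+\frac{\rho^k}{\rho^{k-1}+1}(c^{(k)}_j-\pi^{(k)}_j)\mathbf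 1\{i=n+1,1\le j\le n\}+\frac{\rho^k}{\rho^{k-1}+1}\pi^{(k)}_{j-n-1}\mathbf 1\{i=n,n+2\le j\le 2n+1\}+\frac{\rho}{\rho^{k-1}+1}\pi^{(k)}_{j-n-1}\mathbf 1\{i=n+1,n+2\le j\le2n+1\}+\big((\rho+1)c^{(k)}_{j-n-1}-(1+\rho^{-k})\pi^{(k)}_{j-n-1}\big)\mathbf 1\{i=2n+1,n+2\le j\le 2n+1\}$. *)

theory Defs
  imports Complex_Main "HOL-Computational_Algebra.Primes"
begin

definition rho :: real where "rho = 1 + sqrt 2"

definition nu :: "nat \<Rightarrow> nat" where "nu i = multiplicity (2::nat) i"

definition alpha :: "nat \<Rightarrow> real" where
  "alpha t = rho powi (int (nu (t + 1)) - 1) + 1"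

definition piv :: "nat \<Rightarrow> nat \<Rightarrow> real" where
  "piv k i = (if 1 \<le> i \<and> i \<le> 2^k - 1 then alpha (i - 1) else 0)"

fun cv :: "nat \<Rightarrow> nat \<Rightarrow> real" where
  "cv 0 j = 0"
| "cv (Suc k) j =
    (if k = 0 then (if j = 1 then 2 * (rho - 1) else 0)
     else (let n = 2^k - 1 in
       if 1 \<le> j \<and> j \<le> n then piv k j
       else if j = n + 1 then (1 + 1 / rho^k) * (rho^(k-1) + 1)
       else if n + 2 \<le> j \<and> j \<le> 2*n + 1
         then rho * cv k (j - n - 1) - (rho - 1 - 1 / rho^k) * piv k (j - n - 1)
       else 0))"

fun lbar :: "nat \<Rightarrow> nat \<Rightarrow> nat \<Rightarrow> real" where
  "lbar 0 i j = 0"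
| "lbar (Suc k) i j =
    (if k = 0 then (if i = 0 \<and> j = 1 then rho else if i = 1 \<and> j = 0 then 1 else 0)
     else (let n = 2^k - 1 in
       (if i \<le> n \<and> j \<le> n then lbar k i j else 0)
     + (if n + 1 \<le> i \<and> i \<le> 2*n + 1 \<and> n + 1 \<le> j \<and> j \<le> 2*n + 1
          then rho^2 * lbar k (i - n - 1) (j - n - 1) else 0)
     + (if i = n \<and> j = 2*n + 1 then rho else 0)
     + (if i = 2*n + 1 \<and> j = n then rho^k else 0)
     + (if i = n \<and> n + 1 \<le> j \<and> j \<le> 2*n then rho * piv k (j - n) else 0)
     + (if i = 2*n + 1 \<and> n + 1 \<le> j \<and> j \<le> 2*n then rho * piv k (j - n) else 0)))"

definition lunder :: "nat \<Rightarrow> nat \<Rightarrow> real" where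
  "lunder k j = (if j < 2^k - 1 then alpha j else if j = 2^k - 1 then rho^k else 0)"

text \<open>The row index * is represented by None, a numeric row i by Some i.\<close>
definition lam :: "nat \<Rightarrow> nat option \<Rightarrow> nat \<Rightarrow> real" where
  "lam k i j = (case i of None \<Rightarrow> lunder k j | Some i' \<Rightarrow> lbar k i' j)"

fun mubar :: "nat \<Rightarrow> nat \<Rightarrow> nat \<Rightarrow> real" where
  "mubar 0 i j = 0"
| "mubar (Suc k) i j =
    (if k = 0 then 0
     else (let n = 2^k - 1; q = rho^k / (rho^(k-1) + 1) in
       (if 1 \<le> i \<and> i \<le> n \<and> 1 \<le> j \<and> j \<le> n then mubar k i j else 0)
     + (if n + 2 \<le> i \<and> i \<le> 2*n + 1 \<and> n + 2 \<le> j \<and> j \<le> 2*n + 1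
          then rho^2 * mubar k (i - n - 1) (j - n - 1) else 0)
     + (if i = n \<and> j = n + 1 then rho^k else 0)
     + (if i = n + 1 \<and> j = n + 2 then rho^2 else 0)
     + (if i = 2*n + 1 \<and> j = n + 1 then (rho - 1 / rho^k) * (rho^(k-1) + 1) else 0)
     + (if i = n \<and> 1 \<le> j \<and> j \<le> n then (1 - q) * (cv k j - piv k j) else 0)
     + (if i = n + 1 \<and> 1 \<le> j \<and> j \<le> n then q * (cv k j - piv k j) else 0)
     + (if i = n \<and> n + 2 \<le> j \<and> j \<le> 2*n + 1 then q * piv k (j - n - 1) else 0)
     + (if i = n + 1 \<and> n + 2 \<le> j \<and> j \<le> 2*n + 1
          then rho / (rho^(k-1) + 1) * piv k (j - n - 1) else 0)
     + (if i = 2*n + 1 \<and> n + 2 \<le> j \<and> j \<le> 2*n + 1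
          then (rho + 1) * cv k (j - n - 1) - (1 + 1 / rho^k) * piv k (j - n - 1) else 0)))"

definition mu :: "nat \<Rightarrow> nat option \<Rightarrow> nat \<Rightarrow> real" where
  "mu k i j = (case i of None \<Rightarrow> cv k j + (if j = 1 then 1 else 0) | Some i' \<Rightarrow> mubar k i' j)"

end

theory Submission
  imports Defs
begin

lemma rho_gt2: "rho > 2"
proof -
  have "sqrt 2 > 1" by simp
  thus ?thesis unfolding rho_def by simp
qed
lemma rho_pos: "rho > 0" using rho_gt2 by simp
lemma rho_sq: "rho^2 = 2*rho + 1"
  unfolding rho_def by (simp add: power2_eq_square algebra_simps)
lemma rho_inv: "1 / rho = rho - 2"
  using rho_sq rho_pos by (simp add: field_simps power2_eq_square)

lemma alpha_pos: "alpha t > 0"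
  unfolding alpha_def using rho_pos by (simp add: add_pos_pos)
lemma piv_nonneg: "piv k j \<ge> 0"
  unfolding piv_def using alpha_pos by (simp add: less_imp_le)

lemma nu_pow: "nu (2^k) = k"
  unfolding nu_def by (simp add: multiplicity_prime_power)

lemma nu_add: assumes "1 \<le> j" "j < 2^k" shows "nu (2^k + j) = nu j"
proof -
  define m where "m = multiplicity (2::nat) j"
  have d1: "2^m dvd j" unfolding m_def by (rule multiplicity_dvd)
  have d2: "\<not> 2^Suc m dvd j" unfolding m_def
    using assms(1) by (subst power_dvd_iff_le_multiplicity) auto
  have "2^m \<le> j" using d1 assms(1) by (simp add: dvd_imp_le)
  hence "(2::nat)^m < 2^k" using assms(2) by linarith
  hence "m < k" by (simp add: power_strict_increasing_iff)
  hence "2^Suc m dvd (2::nat)^k" by (intro le_imp_power_dvd) simp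
  hence e: "2^Suc m dvd 2^k + j \<longleftrightarrow> 2^Suc m dvd j" by (simp add: dvd_add_right_iff)
  have "2^m dvd (2::nat)^k" using \<open>m < k\<close> by (simp add: le_imp_power_dvd)
  hence "2^m dvd (2::nat)^k + j" using d1 by simp
  hence "multiplicity 2 (2^k + j) = m" using d2 e by (intro multiplicity_eqI) auto
  thus ?thesis unfolding nu_def m_def by simp
qed

lemma piv_Suc_low: "j \<le> 2^k - 1 \<Longrightarrow> piv (Suc k) j = piv k j"
  unfolding piv_def by auto

lemma piv_Suc_mid: "k \<ge> 1 \<Longrightarrow> piv (Suc k) (2^k) = rho^(k-1) + 1"
proof -
  assume k: "k \<ge> 1"
  have "piv (Suc k) (2^k) = alpha (2^k - 1)" unfolding piv_def by simp
  also have "... = rho powi (int k - 1) + 1" unfolding alpha_def by (simp add: nu_pow)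
  also have "int k - 1 = int (k-1)" using k by simp
  finally show ?thesis by simp
qed

lemma piv_Suc_high: "1 \<le> j \<Longrightarrow> j \<le> 2^k - 1 \<Longrightarrow> piv (Suc k) (2^k + j) = piv k j"
proof -
  assume j: "1 \<le> j" "j \<le> 2^k - 1"
  have "piv (Suc k) (2^k + j) = alpha (2^k + j - 1)" unfolding piv_def using j by auto
  also have "... = alpha (j - 1)" unfolding alpha_def using j nu_add[of j k]
    by (simp add: Suc_leI)
  also have "... = piv k j" unfolding piv_def using j by simp
  finally show ?thesis .
qed

lemma pow_ge1: "(1::nat) \<le> 2^k" by simp

lemma cv_Suc_low: "k \<ge> 1 \<Longrightarrow> 1 \<le> j \<Longrightarrow> j \<le> 2^k - 1 \<Longrightarrow> cv (Suc k) j = piv k j"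
  by (cases k) (auto simp: Let_def)
lemma cv_Suc_mid: "k \<ge> 1 \<Longrightarrow> cv (Suc k) (2^k) = (1+1/rho^k)*(rho^(k-1)+1)"
proof -
  assume "k \<ge> 1"
  moreover have "\<not> ((2::nat)^k \<le> 2^k - Suc 0)" using pow_ge1[of k] by linarith
  ultimately show ?thesis by (auto simp: Let_def)
qed
lemma cv_Suc_high: "k \<ge> 1 \<Longrightarrow> 1 \<le> j \<Longrightarrow> j \<le> 2^k - 1 \<Longrightarrow>
   cv (Suc k) (2^k + j) = rho*cv k j - (rho-1-1/rho^k)*piv k j"
  using pow_ge1[of k] by (auto simp: Let_def)
lemma cv_out: "j = 0 \<or> j > 2^k - 1 \<Longrightarrow> cv k j = 0"
proof (cases k)
  case (Suc m)
  assume "j = 0 \<or> j > 2^k - 1"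
  show ?thesis
  proof (cases "m = 0")
    case True
    thus ?thesis using Suc \<open>j = 0 \<or> j > 2^k - 1\<close> by auto
  next
    case False
    define n where "n = 2^m - (1::nat)"
    have pm: "2^m = n + 1" unfolding n_def by simp
    have "2^k - 1 = 2*n+1" unfolding Suc using pm by simp
    hence c: "\<not> (1 \<le> j \<and> j \<le> n)" "j \<noteq> n + 1" "\<not> (n + 2 \<le> j \<and> j \<le> 2*n + 1)"
      using \<open>j = 0 \<or> j > 2^k - 1\<close> by auto
    have "cv (Suc m) j = (let n = 2^m - 1 in
       if 1 \<le> j \<and> j \<le> n then piv m j
       else if j = n + 1 then (1 + 1 / rho^m) * (rho^(m-1) + 1)
       else if n + 2 \<le> j \<and> j \<le> 2*n + 1
         then rho * cv m (j - n - 1) - (rho - 1 - 1 / rho^m) * piv m (j - n - 1)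
       else 0)" using False by (simp only: cv.simps(2) if_False)
    also have "... = 0" unfolding Let_def n_def[symmetric] using c by (simp only: if_False)
    finally show ?thesis using Suc by simp
  qed
qed simp
lemma piv_out: "j = 0 \<or> j > 2^k - 1 \<Longrightarrow> piv k j = 0"
  unfolding piv_def by auto

lemma split4: "((j::nat) = 0 \<or> j > 2^(Suc k) - 1) \<or> (1 \<le> j \<and> j \<le> 2^k - 1) \<or> j = 2^k
   \<or> (\<exists>j'. j = 2^k + j' \<and> 1 \<le> j' \<and> j' \<le> 2^k - 1)"
proof -
  have "(1::nat) \<le> 2^k" by simp
  show ?thesis
  proof (cases "j > 2^k \<and> j \<le> 2^(Suc k) - 1")
    case True
    then show ?thesis by (intro disjI2 disjI2 disjI2 exI[of _ "j - 2^k"]) auto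
  qed auto
qed

lemma cv1: "cv 1 j = (if j = 1 then 2 * (rho - 1) else 0)" by simp

lemma dA: "cv k j - piv k j \<ge> 0"
proof (induction k arbitrary: j)
  case 0 thus ?case by (simp add: piv_def)
next
  case (Suc k)
  show ?case
  proof (cases "k = 0")
    case True
    have "alpha 0 = 1/rho + 1" unfolding alpha_def by (simp add: nu_def power_int_minus inverse_eq_divide)
    hence "piv 1 1 = rho - 1" unfolding piv_def using rho_inv by simp
    moreover have "rho - 1 \<ge> 0" using rho_gt2 by simp
    ultimately show ?thesis using True by (auto simp: piv_def)
  next
    case False
    hence k: "k \<ge> 1" by simp
    consider "j = 0 \<or> j > 2^(Suc k) - 1" | "1 \<le> j \<and> j \<le> 2^k - 1" | "j = 2^k"
      | j' where "j = 2^k + j'" "1 \<le> j'" "j' \<le> 2^k - 1" using split4[of j k] by blast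
    thus ?thesis
    proof cases
      case 1 thus ?thesis using cv_out[of j "Suc k"] piv_out[of j "Suc k"] by simp
    next
      case 2 thus ?thesis using cv_Suc_low[OF k] piv_Suc_low[of j k] by simp
    next
      case 3
      have "cv (Suc k) j - piv (Suc k) j = (1/rho^k)*(rho^(k-1)+1)"
        using 3 cv_Suc_mid[OF k] piv_Suc_mid[OF k] by (simp add: algebra_simps)
      also have "... \<ge> 0" using rho_pos by simp
      finally show ?thesis .
    next
      case 4
      have "cv (Suc k) j - piv (Suc k) j = rho * (cv k j' - piv k j') + (1/rho^k) * piv k j'"
        using 4 cv_Suc_high[OF k] piv_Suc_high[of j' k] by (simp add: algebra_simps)
      also have "... \<ge> 0" using rho_pos Suc.IH[of j'] piv_nonneg[of k j'] by simp
      finally show ?thesis .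
    qed
  qed
qed

lemma if_nonneg: "(P \<Longrightarrow> (0::real) \<le> a) \<Longrightarrow> 0 \<le> (if P then a else 0)" by auto

lemma lbar_nonneg: "i \<noteq> j \<Longrightarrow> lbar k i j \<ge> 0"
proof (induction k arbitrary: i j)
  case 0 thus ?case by simp
next
  case (Suc k)
  show ?case
  proof (cases "k = 0")
    case True thus ?thesis using rho_pos by simp
  next
    case False
    define n where "n = 2^k - (1::nat)"
    have e: "lbar (Suc k) i j =
       (if i \<le> n \<and> j \<le> n then lbar k i j else 0)
     + (if n + 1 \<le> i \<and> i \<le> 2*n + 1 \<and> n + 1 \<le> j \<and> j \<le> 2*n + 1
          then rho^2 * lbar k (i - n - 1) (j - n - 1) else 0)
     + (if i = n \<and> j = 2*n + 1 then rho else 0)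
     + (if i = 2*n + 1 \<and> j = n then rho^k else 0)
     + (if i = n \<and> n + 1 \<le> j \<and> j \<le> 2*n then rho * piv k (j - n) else 0)
     + (if i = 2*n + 1 \<and> n + 1 \<le> j \<and> j \<le> 2*n then rho * piv k (j - n) else 0)"
      using False by (simp add: Let_def n_def)
    show ?thesis unfolding e
      apply (intro add_nonneg_nonneg if_nonneg)
      subgoal using Suc.IH Suc.prems by blast
      subgoal using Suc.prems by (intro mult_nonneg_nonneg Suc.IH) auto
      subgoal using rho_pos by simp
      subgoal using rho_pos by simp
      subgoal using rho_pos piv_nonneg by (intro mult_nonneg_nonneg) auto
      subgoal using rho_pos piv_nonneg by (intro mult_nonneg_nonneg) auto
      done
  qed
qed

definition qq :: "nat \<Rightarrow> real" where "qq k = rho^k / (rho^(k-1) + 1)"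

lemma mubar_Suc: "k \<ge> 1 \<Longrightarrow> n = 2^k - 1 \<Longrightarrow> mubar (Suc k) i j =
       (if 1 \<le> i \<and> i \<le> n \<and> 1 \<le> j \<and> j \<le> n then mubar k i j else 0)
     + (if n + 2 \<le> i \<and> i \<le> 2*n + 1 \<and> n + 2 \<le> j \<and> j \<le> 2*n + 1
          then rho^2 * mubar k (i - n - 1) (j - n - 1) else 0)
     + (if i = n \<and> j = n + 1 then rho^k else 0)
     + (if i = n + 1 \<and> j = n + 2 then rho^2 else 0)
     + (if i = 2*n + 1 \<and> j = n + 1 then (rho - 1 / rho^k) * (rho^(k-1) + 1) else 0)
     + (if i = n \<and> 1 \<le> j \<and> j \<le> n then (1 - qq k) * (cv k j - piv k j) else 0)
     + (if i = n + 1 \<and> 1 \<le> j \<and> j \<le> n then qq k * (cv k j - piv k j) else 0)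
     + (if i = n \<and> n + 2 \<le> j \<and> j \<le> 2*n + 1 then qq k * piv k (j - n - 1) else 0)
     + (if i = n + 1 \<and> n + 2 \<le> j \<and> j \<le> 2*n + 1
          then rho / (rho^(k-1) + 1) * piv k (j - n - 1) else 0)
     + (if i = 2*n + 1 \<and> n + 2 \<le> j \<and> j \<le> 2*n + 1
          then (rho + 1) * cv k (j - n - 1) - (1 + 1 / rho^k) * piv k (j - n - 1) else 0)"
proof -
  assume k: "k \<ge> 1" and n: "n = 2^k - 1"
  have k0: "(k = 0) = False" using k by simp
  have qd: "rho^k / (rho^(k-1) + 1) = qq k" unfolding qq_def ..
  show ?thesis by (simp only: mubar.simps(2) k0 if_False Let_def n[symmetric] qd)
qed

lemma qq_ge1: "k \<ge> 1 \<Longrightarrow> qq k \<ge> 1"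
proof -
  assume k: "k \<ge> 1"
  have a: "rho^k = rho * rho^(k-1)" using k by (cases k) auto
  have b: "rho * rho^(k-1) \<ge> 2 * rho^(k-1)" using rho_gt2 by (intro mult_right_mono) auto
  have c: "2 * rho^(k-1) \<ge> rho^(k-1) + 1" using rho_gt2 by (simp add: one_le_power)
  have "rho^(k-1) + 1 \<le> rho^k" using a b c by linarith
  moreover have "rho^(k-1) + 1 > 0" using rho_pos by (simp add: add_pos_nonneg)
  ultimately show ?thesis unfolding qq_def by (simp add: le_divide_eq)
qed

lemma last_nonneg: "(rho + 1) * cv k j - (1 + 1 / rho^k) * piv k j \<ge> 0"
proof -
  have "1 / rho^k \<le> 1" using rho_gt2 by (simp add: one_le_power)
  hence "1 + 1 / rho^k \<le> rho + 1" using rho_gt2 by linarith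
  hence "(1 + 1 / rho^k) * piv k j \<le> (rho + 1) * piv k j" using piv_nonneg[of k j]
    by (intro mult_right_mono) auto
  also have "... \<le> (rho + 1) * cv k j" using dA[of k j] rho_gt2 by (intro mult_left_mono) auto
  finally show ?thesis by simp
qed

lemma qq_Suc: "qq (Suc k) = rho * rho^k / (rho^k + 1)" unfolding qq_def by simp

lemma alg1: "(rho - 1/rho^k)*(rho^(k-1)+1) + (1 - qq (Suc k)) * ((1/rho^k)*(rho^(k-1)+1)) \<ge> 0"
proof -
  define x where "x = rho^k"
  define a where "a = rho^(k-1)+1"
  have x: "x > 0" unfolding x_def using rho_pos by simp
  have a: "a > 0" unfolding a_def using rho_pos by (simp add: add_pos_nonneg)
  have "(rho - 1/rho^k)*(rho^(k-1)+1) + (1 - qq (Suc k)) * ((1/rho^k)*(rho^(k-1)+1))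
     = a * (rho - rho/(x+1))"
  proof -
    have h: "qq (Suc k) * (1/x) = rho/(x+1)" using x unfolding qq_Suc x_def[symmetric] by (simp add: field_simps)
    have "(rho - 1/rho^k)*(rho^(k-1)+1) + (1 - qq (Suc k)) * ((1/rho^k)*(rho^(k-1)+1))
       = a * rho - a * (qq (Suc k) * (1/x))" unfolding x_def[symmetric] a_def[symmetric]
      by (simp add: algebra_simps)
    thus ?thesis unfolding h by (simp add: algebra_simps)
  qed
  also have "... \<ge> 0"
  proof -
    have "rho/(x+1) \<le> rho" using x rho_pos by (simp add: divide_le_eq)
    thus ?thesis using a by simp
  qed
  finally show ?thesis .
qed

lemma alg2:
  assumes k: "k \<ge> 1" and B: "m + (1 - qq k) * (c - p) \<ge> 0" and d: "c - p \<ge> 0" and p: "p \<ge> 0"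
  shows "rho^2 * m + ((rho+1) * c - (1 + 1/rho^k) * p)
        + (1 - qq (Suc k)) * (rho * (c - p) + (1/rho^k) * p) \<ge> 0"
proof -
  define x where "x = rho^k"
  define y where "y = rho^(k-1)"
  define q2 where "q2 = qq (Suc k)"
  have x: "x > 0" unfolding x_def using rho_pos by simp
  have y: "y > 0" unfolding y_def using rho_pos by simp
  have xy: "x = rho * y" unfolding x_def y_def using k by (cases k) auto
  have yx: "y \<le> x" using xy y rho_gt2 by simp
  have q1: "qq k = x / (y + 1)" unfolding qq_def x_def y_def by simp
  have q2: "q2 = rho * x / (x + 1)" unfolding q2_def qq_Suc x_def by simp
  have E: "rho^2 * m + ((rho+1) * c - (1 + 1/rho^k) * p)
        + (1 - qq (Suc k)) * (rho * (c - p) + (1/rho^k) * p)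
     = (2*rho+1) * (m + (1 - qq k) * (c - p)) + (c - p) * ((2*rho+1) * qq k - rho * q2)
       + p * (rho - q2 / x)"
    unfolding rho_sq x_def[symmetric] q2_def[symmetric] using x by (simp add: algebra_simps) (simp add: field_simps)
  have c1: "(2*rho+1) * qq k - rho * q2 \<ge> 0"
  proof -
    have "x / (x+1) \<le> x / (y+1)" using x y yx by (intro divide_left_mono) auto
    hence "(rho * rho) * (x / (x + 1)) \<le> (rho * rho) * (x / (y + 1))" using rho_pos by (intro mult_left_mono) auto
    hence "rho * q2 \<le> rho^2 * qq k" unfolding q1 q2 by (simp add: power2_eq_square mult.assoc)
    thus ?thesis using rho_sq by simp
  qed
  have c2: "rho - q2 / x \<ge> 0"
  proof -
    have xx: "x + x * x \<noteq> 0" using x by (metis add_pos_pos mult_pos_pos less_irrefl)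
    have "q2 / x = rho / (x+1)" unfolding q2 using x xx by (simp add: field_simps)
    also have "... \<le> rho" using x rho_pos by (simp add: divide_le_eq)
    finally show ?thesis by simp
  qed
  have t1: "(2*rho+1) * (m + (1 - qq k) * (c - p)) \<ge> 0" using B rho_pos by simp
  have t2: "(c - p) * ((2*rho+1) * qq k - rho * q2) \<ge> 0" using d c1 by simp
  have t3: "p * (rho - q2 / x) \<ge> 0" using p c2 by simp
  show ?thesis unfolding E using t1 t2 t3 by linarith
qed



lemma t1: assumes k: "k\<ge>1" and nd: "n = 2^k - 1" and False: "\<not>(i = n \<and> 1 \<le> j \<and> j \<le> n)"
  and IH1: "\<And>i j. i \<noteq> j \<Longrightarrow> mubar k i j \<ge> 0" and ij: "i \<noteq> j"
  and rk: "1 / rho^k \<le> rho" and q1: "qq k \<ge> 1"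
  shows "mubar (Suc k) i j \<ge> 0"
  unfolding mubar_Suc[OF k nd]
        apply (intro add_nonneg_nonneg if_nonneg)
        subgoal using IH1 ij by blast
        subgoal using ij by (intro mult_nonneg_nonneg IH1) auto
        subgoal using rho_pos by simp
        subgoal by simp
        subgoal using rk rho_pos by (intro mult_nonneg_nonneg) auto
        subgoal using False by blast
        subgoal using q1 dA[of k j] by (intro mult_nonneg_nonneg) auto
        subgoal using q1 piv_nonneg by (intro mult_nonneg_nonneg) auto
        subgoal using rho_pos piv_nonneg
          by (intro mult_nonneg_nonneg divide_nonneg_nonneg add_nonneg_nonneg) auto
        subgoal by (rule last_nonneg)
        done

lemma t2: assumes k: "k\<ge>1" and nd: "n = 2^k - 1" and n1: "n \<ge> 1"
  and P1: "\<And>i j. i \<noteq> j \<Longrightarrow> mubar (Suc k) i j \<ge> 0"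
  and IH2: "\<And>j. j \<noteq> n \<Longrightarrow> mubar k n j + (1 - qq k) * (cv k j - piv k j) \<ge> 0"
  and j: "j \<noteq> 2^(Suc k) - 1"
  shows "mubar (Suc k) (2^(Suc k)-1) j + (1 - qq (Suc k)) * (cv (Suc k) j - piv (Suc k) j) \<ge> 0"
proof -
  have pk: "2^k = n + 1" unfolding nd by simp
  have pSk: "2^(Suc k) - 1 = 2*n + 1" using pk by simp
  note U = mubar_Suc[OF k nd]
    have m0: "mubar (Suc k) (2^(Suc k)-1) j \<ge> 0" by (rule P1) (use j in auto)
    consider "j = 0 \<or> j > 2^(Suc k) - 1" | "1 \<le> j \<and> j \<le> 2^k - 1" | "j = 2^k"
      | j' where "j = 2^k + j'" "1 \<le> j'" "j' \<le> 2^k - 1" using split4[of j k] by blast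
    thus "mubar (Suc k) (2^(Suc k)-1) j + (1 - qq (Suc k)) * (cv (Suc k) j - piv (Suc k) j) \<ge> 0"
    proof cases
      case 1 thus ?thesis using m0 cv_out[of j "Suc k"] piv_out[of j "Suc k"] by simp
    next
      case 2 thus ?thesis using m0 cv_Suc_low[OF k] piv_Suc_low[of j k] by simp
    next
      case 3
      have mv: "mubar (Suc k) (2^(Suc k)-1) j = (rho - 1/rho^k)*(rho^(k-1)+1)"
        unfolding pSk U using 3 pk n1 by simp
      have dv: "cv (Suc k) j - piv (Suc k) j = (1/rho^k)*(rho^(k-1)+1)"
        using 3 cv_Suc_mid[OF k] piv_Suc_mid[OF k] by (simp add: algebra_simps)
      show ?thesis unfolding mv dv using alg1[of k] .
    next
      case 4
      have j'n: "j' \<noteq> n" using 4 j pk pSk by auto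
      have j'r: "1 \<le> j'" "j' \<le> n" using 4 nd by auto
      have mv: "mubar (Suc k) (2^(Suc k)-1) j = rho^2 * mubar k n j'
                + ((rho + 1) * cv k j' - (1 + 1 / rho^k) * piv k j')"
        unfolding pSk U using 4(1) j'r j'n pk n1 by simp
      have dv: "cv (Suc k) j - piv (Suc k) j = rho * (cv k j' - piv k j') + (1/rho^k) * piv k j'"
        using 4 cv_Suc_high[OF k] piv_Suc_high[of j' k] by (simp add: algebra_simps)
      show ?thesis unfolding mv dv
        using alg2[OF k IH2[OF j'n] dA[of k j'] piv_nonneg[of k j']] .
    qed
qed
lemma mubar_main:
  assumes "k \<ge> 1"
  shows "(\<forall>i j. i \<noteq> j \<longrightarrow> mubar k i j \<ge> 0) \<and>
         (\<forall>j. j \<noteq> 2^k - 1 \<longrightarrow> mubar k (2^k-1) j + (1 - qq k) * (cv k j - piv k j) \<ge> 0)"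
  using assms
proof (induction k rule: dec_induct)
  case base
  show ?case by (auto simp: piv_def)
next
  case (step k)
  have k: "k \<ge> 1" using step.hyps by simp
  define n where "n = 2^k - (1::nat)"
  have "(2::nat)^k \<ge> 2^1" using k by (intro power_increasing) auto
  hence n1: "n \<ge> 1" unfolding n_def by simp
  have IH1: "\<And>i j. i \<noteq> j \<Longrightarrow> mubar k i j \<ge> 0" using step.IH by blast
  have IH2: "\<And>j. j \<noteq> n \<Longrightarrow> mubar k n j + (1 - qq k) * (cv k j - piv k j) \<ge> 0"
    using step.IH unfolding n_def by blast
  have "1 \<le> rho^k" using rho_gt2 by (simp add: one_le_power)
  hence "1 / rho^k \<le> 1" by simp
  hence rk: "1 / rho^k \<le> rho" using rho_gt2 by linarith
  have q1: "qq k \<ge> 1" using qq_ge1[OF k] .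
  have P1: "\<And>i j. i \<noteq> j \<Longrightarrow> mubar (Suc k) i j \<ge> 0"
  proof -
    fix i j :: nat
    assume ij: "i \<noteq> j"
    show "mubar (Suc k) i j \<ge> 0"
    proof (cases "i = n \<and> 1 \<le> j \<and> j \<le> n")
      case True
      have "mubar (Suc k) i j = mubar k n j + (1 - qq k) * (cv k j - piv k j)"
        unfolding mubar_Suc[OF k n_def] using True n1 by simp
      thus ?thesis using IH2[of j] True ij by simp
    next
      case False
      show ?thesis by (rule t1[OF k n_def False IH1 ij rk q1])
    qed
  qed
  have P2: "\<And>j. j \<noteq> 2^(Suc k) - 1 \<Longrightarrow>
     mubar (Suc k) (2^(Suc k)-1) j + (1 - qq (Suc k)) * (cv (Suc k) j - piv (Suc k) j) \<ge> 0"
    by (rule t2[OF k n_def n1 P1 IH2])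
  show ?case using P1 P2 by blast
qed

theorem lemma12:
  fixes k :: nat
  assumes "k \<ge> 1"
  shows "(\<forall>i \<in> insert None (Some ` {0..(2::nat)^k - 1}). \<forall>j \<in> {0..(2::nat)^k - 1}.
            i \<noteq> Some j \<longrightarrow> lam k i j \<ge> 0)
       \<and> (\<forall>i \<in> insert None (Some ` {1..(2::nat)^k - 1}). \<forall>j \<in> {1..(2::nat)^k - 1}.
            i \<noteq> Some j \<longrightarrow> mu k i j \<ge> 0)"
proof -
  have lu: "lunder k j \<ge> 0" for j
    unfolding lunder_def using alpha_pos[of j] rho_pos by (simp add: less_imp_le)
  have L: "lam k i j \<ge> 0" if "i \<noteq> Some j" for i j
    using that lu lbar_nonneg unfolding lam_def by (cases i) auto
  have cvn: "cv k j \<ge> 0" for j using dA[of k j] piv_nonneg[of k j] by linarith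
  have M: "mu k i j \<ge> 0" if "i \<noteq> Some j" for i j
    using that cvn mubar_main[OF assms] unfolding mu_def by (cases i) auto
  show ?thesis using L M by blast
qed

end
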